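(* Let $V$ be a real vector space endowed with some topology and $X$ a convex cone in $V$. Suppose $w\in\mathbb{R}$, $f\in P_X$, and $u:X\to\mathbb{R}$ is a locally nonsatiated function. If $C\subseteq X$ is a cone in $V$ and $u$ is $C$-antichain-quasiconcave, then $\arg\max_{x\in B^w_{f,X}}u(x)$ is a convex $C$-antichain included in $\operatorname{bd}(F^w_f)$.
   Context: A cone in $V$ is a subset $K$ with $\lambda K\subseteq K$ for all $\lambda>0$ (possibly empty, need not contain $0$). $V^*$ denotes the continuous linear functionals on $V$; $P_X=\{f\in V^*: f(x)>0\text{ for all }x\in X\setminus\{0\}\}$; $F^w_f=\{v\in V:f(v)\le w\}$, $B^w_{f,X}=F^w_f\cap X$; $\operatorname{bd}$ is the topological boundary. A set $A$ is $C$-antichain-convex iff for all $x,y\in A$, $\lambda\in[0,1]$ with $y-x\notin C\cup(-C)$, $\lambda x+(1-\lambda)y\in A$; $A$ is a $C$-antichain iff for all distinct $x,y\in A$, $y-x\notin C\cup(-C)$. $u$ is $C$-antichain-quasiconcave iff $\{x\in X:u(x)\ge\lambda\}$ is $C$-antichain-convex for every $\lambda\in\mathbb{R}$; $u$ is locally nonsatiated iff $x\in\operatorname{cl}(\{y\in X:u(y)>u(x)\})$ for all $x\in X$ (closure in $V$). *)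

theory Defs
  imports "HOL-Analysis.Analysis"
begin

text \<open>Cone in the sense of the paper: closed under multiplication by strictly positive
  scalars (may be empty, need not contain 0).\<close>
definition pos_cone :: "'a::real_vector set \<Rightarrow> bool" where
  "pos_cone K \<longleftrightarrow> (\<forall>c::real>0. \<forall>x\<in>K. c *\<^sub>R x \<in> K)"

definition strictly_pos_functionals :: "'a::{real_vector,topological_space} set \<Rightarrow> ('a \<Rightarrow> real) set" where
  "strictly_pos_functionals X =
     {f. linear f \<and> continuous_on UNIV f \<and> (\<forall>x\<in>X - {0}. f x > 0)}"

definition budget_half :: "('a \<Rightarrow> real) \<Rightarrow> real \<Rightarrow> 'a set" where
  "budget_half f w = {v. f v \<le> w}"

definition budget_set :: "('a \<Rightarrow> real) \<Rightarrow> real \<Rightarrow> 'a set \<Rightarrow> 'a set" where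
  "budget_set f w X = budget_half f w \<inter> X"

definition antichain_convex :: "'a::real_vector set \<Rightarrow> 'a set \<Rightarrow> bool" where
  "antichain_convex C A \<longleftrightarrow>
     (\<forall>x\<in>A. \<forall>y\<in>A. \<forall>t::real. 0 \<le> t \<and> t \<le> 1 \<and> y - x \<notin> C \<union> uminus ` C
        \<longrightarrow> t *\<^sub>R x + (1 - t) *\<^sub>R y \<in> A)"

definition antichain :: "'a::real_vector set \<Rightarrow> 'a set \<Rightarrow> bool" where
  "antichain C A \<longleftrightarrow> (\<forall>x\<in>A. \<forall>y\<in>A. x \<noteq> y \<longrightarrow> y - x \<notin> C \<union> uminus ` C)"

definition antichain_quasiconcave :: "'a::real_vector set \<Rightarrow> 'a set \<Rightarrow> ('a \<Rightarrow> real) \<Rightarrow> bool" where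
  "antichain_quasiconcave C X u \<longleftrightarrow> (\<forall>t::real. antichain_convex C {x\<in>X. u x \<ge> t})"

definition locally_nonsatiated :: "'a::topological_space set \<Rightarrow> ('a \<Rightarrow> real) \<Rightarrow> bool" where
  "locally_nonsatiated X u \<longleftrightarrow> (\<forall>x\<in>X. x \<in> closure {y\<in>X. u y > u x})"

definition argmax_on :: "'a set \<Rightarrow> ('a \<Rightarrow> real) \<Rightarrow> 'a set" where
  "argmax_on B u = {x\<in>B. \<forall>y\<in>B. u y \<le> u x}"

end

theory Submission
  imports Defs
begin

theorem theorem14:
  fixes X C :: "'a::{real_vector,topological_space} set"
    and f u :: "'a \<Rightarrow> real" and w :: real
  assumes "convex X" and "pos_cone X"
    and "f \<in> strictly_pos_functionals X"
    and "locally_nonsatiated X u"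
    and "C \<subseteq> X" and "pos_cone C"
    and "antichain_quasiconcave C X u"
  shows "convex (argmax_on (budget_set f w X) u)
       \<and> antichain C (argmax_on (budget_set f w X) u)
       \<and> argmax_on (budget_set f w X) u \<subseteq> frontier (budget_half f w)"
proof -
  let ?M = "argmax_on (budget_set f w X) u"
  have lin: "linear f" and cont: "continuous_on UNIV f" and pos: "\<And>x. x \<in> X - {0} \<Longrightarrow> f x > 0"
    using assms(3) by (auto simp: strictly_pos_functionals_def)
  have Mdef: "\<And>x. x \<in> ?M \<longleftrightarrow> x \<in> X \<and> f x \<le> w \<and> (\<forall>y. y \<in> X \<and> f y \<le> w \<longrightarrow> u y \<le> u x)"
    by (auto simp: argmax_on_def budget_set_def budget_half_def)
  have fr: "?M \<subseteq> frontier (budget_half f w)"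
  proof
    fix x assume x: "x \<in> ?M"
    hence xH: "x \<in> budget_half f w" using Mdef by (auto simp: budget_half_def)
    have "x \<notin> interior (budget_half f w)"
    proof
      assume "x \<in> interior (budget_half f w)"
      then obtain U where U: "open U" "x \<in> U" "U \<subseteq> budget_half f w"
        by (meson interiorE)
      have "x \<in> closure {y\<in>X. u y > u x}" using assms(4) x Mdef
        by (auto simp: locally_nonsatiated_def)
      hence "{y\<in>X. u y > u x} \<inter> U \<noteq> {}"
        using U unfolding closure_iff_nhds_not_empty by blast
      then obtain y where y: "y \<in> U" "y \<in> X" "u y > u x" by blast
      have "f y \<le> w" using y(1) U(3) by (auto simp: budget_half_def)
      hence "u y \<le> u x" using x y(2) Mdef by blast
      thus False using y(3) by simp
    qed
    thus "x \<in> frontier (budget_half f w)" using xH closure_subset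
      by (auto simp: frontier_def)
  qed
  have opn: "open {v. f v < w}"
  proof -
    have "open (f -` {..<w})"
      using cont by (simp add: continuous_on_open_vimage)
    thus ?thesis by (simp add: vimage_def)
  qed
  have intr: "{v. f v < w} \<subseteq> interior (budget_half f w)"
    using opn by (intro interior_maximal) (auto simp: budget_half_def)
  have ltw: "\<And>x. x \<in> ?M \<Longrightarrow> \<not> f x < w"
    using fr intr by (auto simp: frontier_def)
  have ac: "antichain C ?M"
    unfolding antichain_def
  proof (intro ballI impI)
    fix x y assume x: "x \<in> ?M" and y: "y \<in> ?M" and ne: "x \<noteq> y"
    show "y - x \<notin> C \<union> uminus ` C"
    proof
      assume "y - x \<in> C \<union> uminus ` C"
      then consider "y - x \<in> C" | "x - y \<in> C"
        by (metis UnE imageE minus_diff_eq minus_minus)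
      thus False
      proof cases
        case 1
        hence "f (y - x) > 0" using pos assms(5) ne by auto
        hence "f x < f y" using linear_diff[OF lin] by simp
        thus False using ltw[OF x] y Mdef by force
      next
        case 2
        hence "f (x - y) > 0" using pos assms(5) ne by auto
        hence "f y < f x" using linear_diff[OF lin] by simp
        thus False using ltw[OF y] x Mdef by force
      qed
    qed
  qed
  have cv: "convex ?M"
    unfolding convex_def
  proof (intro ballI allI impI)
    fix x y and a b :: real
    assume x: "x \<in> ?M" and y: "y \<in> ?M" and ab0: "0 \<le> a" "0 \<le> b" "a + b = 1"
    note ab = ab0
    show "a *\<^sub>R x + b *\<^sub>R y \<in> ?M"
    proof (cases "x = y")
      case True
      thus ?thesis using x ab by (metis scaleR_add_left scaleR_one)
    next
      case False
      hence nc: "y - x \<notin> C \<union> uminus ` C" using ac x y by (auto simp: antichain_def)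
      have uxy: "u x = u y" using x y Mdef by (meson order_antisym)
      have "antichain_convex C {z\<in>X. u z \<ge> u x}"
        using assms(7) by (simp add: antichain_quasiconcave_def)
      hence z: "a *\<^sub>R x + (1 - a) *\<^sub>R y \<in> {z\<in>X. u z \<ge> u x}"
        using x y uxy nc ab Mdef unfolding antichain_convex_def by auto
      have b: "b = 1 - a" using ab by simp
      have "f (a *\<^sub>R x + b *\<^sub>R y) = a * f x + b * f y"
        using lin by (simp add: linear_add linear_scale)
      also have "\<dots> \<le> a * w + b * w"
        using ab x y Mdef by (intro add_mono mult_left_mono) auto
      also have "\<dots> = w" using ab by (simp add: distrib_right[symmetric])
      finally have "f (a *\<^sub>R x + b *\<^sub>R y) \<le> w" .
      thus ?thesis using z b x Mdef by force
    qed
  qed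
  show ?thesis using cv ac fr by blast
qed

end
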